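(* Let $H_1,H_2$ be vertex-disjoint graphs, let $Y_1$ be a minimal blocking set of $H_1$ with $|Y_1|\ge2$, let $Y_2$ be a minimal blocking set of $H_2$, and let $y_1\in Y_1$, $y_2\in Y_2$. Let $H$ be the graph with vertex set $V(H_1)\cup V(H_2)$ and edge set $E(H_1)\cup E(H_2)\cup\{\{y_1,y_2\}\}$. Then $\mathrm{OPT}(H)=\mathrm{OPT}(H_1)+\mathrm{OPT}(H_2)$ and $(Y_1\cup Y_2)\setminus\{y_1,y_2\}$ is a minimal blocking set of $H$.
   Context: $\mathrm{OPT}(G)$ is the minimum vertex cover size. $Y\subseteq V(G)$ is a blocking set of $G$ if no vertex cover of $G$ of size $\mathrm{OPT}(G)$ contains $Y$; minimal if no proper subset is a blocking set. *)

theory Defs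
  imports Main
begin

definition graph :: "'a set \<Rightarrow> 'a set set \<Rightarrow> bool" where
  "graph V E \<longleftrightarrow> finite V \<and> (\<forall>e\<in>E. e \<subseteq> V \<and> card e = 2)"

definition vertex_cover :: "'a set \<Rightarrow> 'a set set \<Rightarrow> 'a set \<Rightarrow> bool" where
  "vertex_cover V E C \<longleftrightarrow> C \<subseteq> V \<and> (\<forall>e\<in>E. e \<inter> C \<noteq> {})"

definition OPT :: "'a set \<Rightarrow> 'a set set \<Rightarrow> nat" where
  "OPT V E = Min (card ` {C. vertex_cover V E C})"

definition blocking_set :: "'a set \<Rightarrow> 'a set set \<Rightarrow> 'a set \<Rightarrow> bool" where
  "blocking_set V E Y \<longleftrightarrow> Y \<subseteq> V \<and>
     \<not> (\<exists>C. vertex_cover V E C \<and> card C = OPT V E \<and> Y \<subseteq> C)"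

definition minimal_blocking_set :: "'a set \<Rightarrow> 'a set set \<Rightarrow> 'a set \<Rightarrow> bool" where
  "minimal_blocking_set V E Y \<longleftrightarrow> blocking_set V E Y \<and>
     (\<forall>Y'. Y' \<subset> Y \<longrightarrow> \<not> blocking_set V E Y')"

end

theory Submission
  imports Defs
begin

lemma opt_le:
  assumes "graph V E" "vertex_cover V E C" shows "OPT V E \<le> card C"
proof -
  have "card ` {C. vertex_cover V E C} \<subseteq> card ` Pow V"
    unfolding vertex_cover_def by auto
  moreover have "finite V" using assms(1) unfolding graph_def by auto
  ultimately have "finite (card ` {C. vertex_cover V E C})"
    by (meson finite_Pow_iff finite_imageI finite_subset)
  moreover have "card C \<in> card ` {C. vertex_cover V E C}" using assms(2) by blast
  ultimately show ?thesis unfolding OPT_def by (rule Min_le)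
qed

lemma opt_ex:
  assumes "graph V E" shows "\<exists>C. vertex_cover V E C \<and> card C = OPT V E"
proof -
  have "card ` {C. vertex_cover V E C} \<subseteq> card ` Pow V"
    unfolding vertex_cover_def by auto
  moreover have "finite V" using assms(1) unfolding graph_def by auto
  ultimately have f: "finite (card ` {C. vertex_cover V E C})"
    by (meson finite_Pow_iff finite_imageI finite_subset)
  have "vertex_cover V E V" unfolding vertex_cover_def
  proof (intro conjI ballI)
    fix e assume "e \<in> E"
    hence "e \<subseteq> V" "card e = 2" using assms unfolding graph_def by auto
    thus "e \<inter> V \<noteq> {}" by (metis Int_absorb2 card.empty zero_neq_numeral)
  qed simp
  hence ne: "card ` {C. vertex_cover V E C} \<noteq> {}" by auto
  from Min_in[OF f ne] show ?thesis unfolding OPT_def by auto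
qed

lemma mbs_sub:
  assumes "minimal_blocking_set V E Y" "Y' \<subset> Y"
  shows "\<exists>C. vertex_cover V E C \<and> card C = OPT V E \<and> Y' \<subseteq> C"
  using assms unfolding minimal_blocking_set_def blocking_set_def by blast

theorem mainTheorem15:
  fixes V1 V2 :: "'a set" and E1 E2 :: "'a set set" and Y1 Y2 :: "'a set" and y1 y2 :: 'a
  assumes "graph V1 E1" and "graph V2 E2"
    and "V1 \<inter> V2 = {}"
    and "minimal_blocking_set V1 E1 Y1" and "card Y1 \<ge> 2"
    and "minimal_blocking_set V2 E2 Y2"
    and "y1 \<in> Y1" and "y2 \<in> Y2"
  shows "OPT (V1 \<union> V2) (E1 \<union> E2 \<union> {{y1, y2}}) = OPT V1 E1 + OPT V2 E2
     \<and> minimal_blocking_set (V1 \<union> V2) (E1 \<union> E2 \<union> {{y1, y2}}) ((Y1 \<union> Y2) - {y1, y2})"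
proof -
  let ?V = "V1 \<union> V2" and ?E = "E1 \<union> E2 \<union> {{y1, y2}}"
  have Y1V: "Y1 \<subseteq> V1" and Y2V: "Y2 \<subseteq> V2" using assms(4,6)
    unfolding minimal_blocking_set_def blocking_set_def by auto
  have y1V: "y1 \<in> V1" and y2V: "y2 \<in> V2" using Y1V Y2V assms(7,8) by auto
  have ne: "y1 \<noteq> y2" using y1V y2V assms(3) by auto
  have fV1: "finite V1" and fV2: "finite V2" using assms(1,2) unfolding graph_def by auto
  have g: "graph ?V ?E" using assms(1,2) fV1 fV2 y1V y2V ne unfolding graph_def by auto
  have comb: "vertex_cover ?V ?E (C1 \<union> C2) \<and> card (C1 \<union> C2) = card C1 + card C2"
    if "vertex_cover V1 E1 C1" "vertex_cover V2 E2 C2" "y1 \<in> C1 \<or> y2 \<in> C2" for C1 C2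
  proof -
    have "C1 \<subseteq> V1" "C2 \<subseteq> V2" using that unfolding vertex_cover_def by auto
    hence "finite C1" "finite C2" "C1 \<inter> C2 = {}" using fV1 fV2 assms(3)
      by (auto intro: finite_subset)
    hence "card (C1 \<union> C2) = card C1 + card C2" by (simp add: card_Un_disjoint)
    moreover have "vertex_cover ?V ?E (C1 \<union> C2)" using that unfolding vertex_cover_def by auto
    ultimately show ?thesis by simp
  qed
  have restr: "vertex_cover V1 E1 (C \<inter> V1) \<and> vertex_cover V2 E2 (C \<inter> V2)
      \<and> card C = card (C \<inter> V1) + card (C \<inter> V2)" if "vertex_cover ?V ?E C" for C
  proof -
    have "C \<subseteq> ?V" using that unfolding vertex_cover_def by auto
    hence "C = (C \<inter> V1) \<union> (C \<inter> V2)" by auto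
    moreover have "finite (C \<inter> V1)" "finite (C \<inter> V2)" using fV1 fV2 by auto
    moreover have "(C \<inter> V1) \<inter> (C \<inter> V2) = {}" using assms(3) by auto
    ultimately have "card C = card (C \<inter> V1) + card (C \<inter> V2)"
      using card_Un_disjoint by (metis (no_types))
    moreover have "vertex_cover V1 E1 (C \<inter> V1)" unfolding vertex_cover_def
    proof (intro conjI ballI)
      fix e assume e: "e \<in> E1"
      hence "e \<inter> C \<noteq> {}" using that unfolding vertex_cover_def by auto
      moreover have "e \<subseteq> V1" using e assms(1) unfolding graph_def by auto
      ultimately show "e \<inter> (C \<inter> V1) \<noteq> {}" by auto
    qed auto
    moreover have "vertex_cover V2 E2 (C \<inter> V2)" unfolding vertex_cover_def
    proof (intro conjI ballI)
      fix e assume e: "e \<in> E2"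
      hence "e \<inter> C \<noteq> {}" using that unfolding vertex_cover_def by auto
      moreover have "e \<subseteq> V2" using e assms(2) unfolding graph_def by auto
      ultimately show "e \<inter> (C \<inter> V2) \<noteq> {}" by auto
    qed auto
    ultimately show ?thesis by simp
  qed
  obtain y' where y': "y' \<in> Y1" "y' \<noteq> y1"
  proof -
    have "Y1 \<noteq> {y1}" using assms(5) by auto
    thus ?thesis using that assms(7) by blast
  qed
  obtain C1 where C1: "vertex_cover V1 E1 C1" "card C1 = OPT V1 E1" "Y1 - {y'} \<subseteq> C1"
    using mbs_sub[OF assms(4), of "Y1 - {y'}"] y' by blast
  have "y1 \<in> C1" using C1 y' assms(7) by auto
  obtain C2 where C2: "vertex_cover V2 E2 C2" "card C2 = OPT V2 E2"
    using opt_ex[OF assms(2)] by blast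
  have le: "OPT ?V ?E \<le> OPT V1 E1 + OPT V2 E2"
    using comb[OF C1(1) C2(1)] \<open>y1 \<in> C1\<close> C1 C2 opt_le[OF g] by fastforce
  have ge: "OPT V1 E1 + OPT V2 E2 \<le> OPT ?V ?E"
  proof -
    obtain C where C: "vertex_cover ?V ?E C" "card C = OPT ?V ?E" using opt_ex[OF g] by blast
    show ?thesis using restr[OF C(1)] C(2) opt_le[OF assms(1)] opt_le[OF assms(2)]
      by (metis add_mono)
  qed
  have opt: "OPT ?V ?E = OPT V1 E1 + OPT V2 E2" using le ge by simp
  let ?Y = "(Y1 \<union> Y2) - {y1, y2}"
  have bl: "blocking_set ?V ?E ?Y"
    unfolding blocking_set_def
  proof
    show "?Y \<subseteq> ?V" using Y1V Y2V by auto
    show "\<not> (\<exists>C. vertex_cover ?V ?E C \<and> card C = OPT ?V ?E \<and> ?Y \<subseteq> C)"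
    proof
      assume "\<exists>C. vertex_cover ?V ?E C \<and> card C = OPT ?V ?E \<and> ?Y \<subseteq> C"
      then obtain C where C: "vertex_cover ?V ?E C" "card C = OPT ?V ?E" "?Y \<subseteq> C" by blast
      note r = restr[OF C(1)]
      have o1: "OPT V1 E1 \<le> card (C \<inter> V1)" using r opt_le[OF assms(1)] by blast
      have o2: "OPT V2 E2 \<le> card (C \<inter> V2)" using r opt_le[OF assms(2)] by blast
      have e1: "card (C \<inter> V1) = OPT V1 E1" and e2: "card (C \<inter> V2) = OPT V2 E2"
        using o1 o2 r C(2) opt by linarith+
      have "{y1, y2} \<inter> C \<noteq> {}" using C(1) unfolding vertex_cover_def by auto
      hence "y1 \<in> C \<or> y2 \<in> C" by auto
      thus False
      proof
        assume "y1 \<in> C"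
        hence "Y1 \<subseteq> C \<inter> V1" using C(3) Y1V ne y2V assms(3) by auto
        thus False using assms(4) r e1 unfolding minimal_blocking_set_def blocking_set_def by blast
      next
        assume "y2 \<in> C"
        hence "Y2 \<subseteq> C \<inter> V2" using C(3) Y2V ne y1V assms(3) by auto
        thus False using assms(6) r e2 unfolding minimal_blocking_set_def blocking_set_def by blast
      qed
    qed
  qed
  have mn: "\<not> blocking_set ?V ?E Y'" if "Y' \<subset> ?Y" for Y'
  proof -
    let ?A1 = "Y' \<inter> V1" and ?A2 = "Y' \<inter> V2"
    have s1: "?A1 \<subseteq> Y1 - {y1}" and s2: "?A2 \<subseteq> Y2 - {y2}"
      using that Y1V Y2V assms(3) by auto
    have Ysplit: "Y' = ?A1 \<union> ?A2" using that Y1V Y2V by auto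
    have "?A1 \<subset> Y1 - {y1} \<or> ?A2 \<subset> Y2 - {y2}"
    proof (rule ccontr)
      assume "\<not> ?thesis"
      hence "?A1 = Y1 - {y1}" "?A2 = Y2 - {y2}" using s1 s2 by auto
      hence "Y' = ?Y" using Ysplit Y1V Y2V y1V y2V assms(3) by auto
      thus False using that by auto
    qed
    hence "\<exists>C1 C2. vertex_cover V1 E1 C1 \<and> card C1 = OPT V1 E1 \<and> ?A1 \<subseteq> C1
        \<and> vertex_cover V2 E2 C2 \<and> card C2 = OPT V2 E2 \<and> ?A2 \<subseteq> C2 \<and> (y1 \<in> C1 \<or> y2 \<in> C2)"
    proof
      assume a: "?A1 \<subset> Y1 - {y1}"
      have "insert y1 ?A1 \<subset> Y1" using a assms(7) by auto
      from mbs_sub[OF assms(4) this] obtain D1 where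
        "vertex_cover V1 E1 D1" "card D1 = OPT V1 E1" "insert y1 ?A1 \<subseteq> D1" by blast
      moreover have "?A2 \<subset> Y2" using s2 assms(8) by auto
      from mbs_sub[OF assms(6) this] obtain D2 where
        "vertex_cover V2 E2 D2" "card D2 = OPT V2 E2" "?A2 \<subseteq> D2" by blast
      ultimately show ?thesis by blast
    next
      assume a: "?A2 \<subset> Y2 - {y2}"
      have "insert y2 ?A2 \<subset> Y2" using a assms(8) by auto
      from mbs_sub[OF assms(6) this] obtain D2 where
        "vertex_cover V2 E2 D2" "card D2 = OPT V2 E2" "insert y2 ?A2 \<subseteq> D2" by blast
      moreover have "?A1 \<subset> Y1" using s1 assms(7) by auto
      from mbs_sub[OF assms(4) this] obtain D1 where
        "vertex_cover V1 E1 D1" "card D1 = OPT V1 E1" "?A1 \<subseteq> D1" by blast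
      ultimately show ?thesis by blast
    qed
    then obtain D1 D2 where D: "vertex_cover V1 E1 D1" "card D1 = OPT V1 E1" "?A1 \<subseteq> D1"
        "vertex_cover V2 E2 D2" "card D2 = OPT V2 E2" "?A2 \<subseteq> D2" "y1 \<in> D1 \<or> y2 \<in> D2"
      by blast
    have "vertex_cover ?V ?E (D1 \<union> D2)" "card (D1 \<union> D2) = OPT ?V ?E" "Y' \<subseteq> D1 \<union> D2"
      using comb[OF D(1) D(4) D(7)] D opt Ysplit by auto
    thus ?thesis unfolding blocking_set_def by blast
  qed
  show ?thesis using opt bl mn unfolding minimal_blocking_set_def by blast
qed

end
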